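(* Let $X\in\mathrm{Alex}^n(0)$ and let $f:X\to\mathbb{R}$ be a Lipschitz continuous affine function with optimal Lipschitz constant $\|f\|$. If there is a unit-speed line $\gamma:\mathbb{R}\to X$ with $\infty>(f\circ\gamma)'=\|f\|>0$, then there is a metric space $Z$ and an isometry $X\cong Z\times\mathbb{R}$ under which $f(z,t)=\|f\|\,t$.
   Context: $\mathrm{Alex}^n(0)$ denotes the class of complete geodesic metric spaces of Hausdorff dimension $n<\infty$ with nonnegative curvature in the sense of Alexandrov. A function is affine if its composition with every geodesic is affine. A unit-speed line is a curve $\gamma:\mathbb{R}\to X$ with $d(\gamma(s),\gamma(t))=|s-t|$ for all $s,t$. *)

theory Defs
  imports "HOL-Analysis.Analysis"
begin

definition unit_segment :: "(real \<Rightarrow> 'a::metric_space) \<Rightarrow> real \<Rightarrow> bool" where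
  "unit_segment \<sigma> L \<longleftrightarrow> 0 \<le> L \<and>
     (\<forall>s\<in>{0..L}. \<forall>t\<in>{0..L}. dist (\<sigma> s) (\<sigma> t) = \<bar>s - t\<bar>)"

definition geodesic_space :: "'a::metric_space itself \<Rightarrow> bool" where
  "geodesic_space _ \<longleftrightarrow> (\<forall>x y::'a. \<exists>\<sigma>. unit_segment \<sigma> (dist x y) \<and> \<sigma> 0 = x \<and> \<sigma> (dist x y) = y)"

text \<open>Nonnegative curvature in the sense of Alexandrov (triangle comparison with the
  Euclidean plane): for every point p and every geodesic \<sigma> of length L,
  d(p,\<sigma> t)^2 \<ge> (1-t/L) d(p,\<sigma> 0)^2 + (t/L) d(p,\<sigma> L)^2 - t (L-t)  (multiplied by L).\<close>
definition curv_nonneg :: "'a::metric_space itself \<Rightarrow> bool" where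
  "curv_nonneg _ \<longleftrightarrow> (\<forall>(p::'a) \<sigma> L t. unit_segment \<sigma> L \<longrightarrow> t \<in> {0..L} \<longrightarrow>
      L * (dist p (\<sigma> t))\<^sup>2 \<ge> (L - t) * (dist p (\<sigma> 0))\<^sup>2 + t * (dist p (\<sigma> L))\<^sup>2 - t * (L - t) * L)"

definition hausdorff_delta :: "real \<Rightarrow> real \<Rightarrow> 'a::metric_space set \<Rightarrow> ennreal" where
  "hausdorff_delta s \<delta> A = Inf {(\<Sum>i. ennreal (diameter (U i) powr s)) | U :: nat \<Rightarrow> 'a set.
      A \<subseteq> (\<Union>i. U i) \<and> (\<forall>i. bounded (U i) \<and> diameter (U i) \<le> \<delta>)}"

definition hausdorff_measure :: "real \<Rightarrow> 'a::metric_space set \<Rightarrow> ennreal" where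
  "hausdorff_measure s A = (SUP \<delta>\<in>{0<..}. hausdorff_delta s \<delta> A)"

definition hausdorff_dim :: "'a::metric_space set \<Rightarrow> ereal" where
  "hausdorff_dim A = Inf {ereal s | s. 0 < s \<and> hausdorff_measure s A = 0}"

text \<open>Alex^n(0): complete geodesic spaces of Hausdorff dimension n with curvature \<ge> 0.
  Completeness is provided by the type class complete_space.\<close>
definition Alex0 :: "nat \<Rightarrow> 'a::complete_space itself \<Rightarrow> bool" where
  "Alex0 n T \<longleftrightarrow> geodesic_space T \<and> curv_nonneg T \<and> hausdorff_dim (UNIV::'a set) = ereal (real n)"

definition affine_fun :: "('a::metric_space \<Rightarrow> real) \<Rightarrow> bool" where
  "affine_fun f \<longleftrightarrow> (\<forall>\<sigma> L. unit_segment \<sigma> L \<longrightarrow>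
     (\<forall>s\<in>{0..L}. \<forall>t\<in>{0..L}. \<forall>u\<in>{0..1}.
        f (\<sigma> ((1 - u) * s + u * t)) = (1 - u) * f (\<sigma> s) + u * f (\<sigma> t)))"

definition lipschitz_fun :: "('a::metric_space \<Rightarrow> real) \<Rightarrow> bool" where
  "lipschitz_fun f \<longleftrightarrow> (\<exists>C. \<forall>x y. \<bar>f x - f y\<bar> \<le> C * dist x y)"

definition lip_const :: "('a::metric_space \<Rightarrow> real) \<Rightarrow> real" where
  "lip_const f = Sup {\<bar>f x - f y\<bar> / dist x y | x y. x \<noteq> y}"

definition unit_line :: "(real \<Rightarrow> 'a::metric_space) \<Rightarrow> bool" where
  "unit_line \<gamma> \<longleftrightarrow> (\<forall>s t. dist (\<gamma> s) (\<gamma> t) = \<bar>s - t\<bar>)"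

end

theory Submission
  imports Defs "HOL-Real_Asymp.Real_Asymp"
begin

lemma concave_nonneg_const:
  fixes \<phi> :: "real \<Rightarrow> real"
  assumes cc: "\<And>t1 t t2. t1 < t \<Longrightarrow> t < t2 \<Longrightarrow> (t2 - t1) * \<phi> t \<ge> (t2 - t) * \<phi> t1 + (t - t1) * \<phi> t2"
    and nn: "\<And>t. \<phi> t \<ge> 0"
  shows "\<phi> u = \<phi> v"
proof -
  have le: "\<phi> v \<ge> \<phi> u" for u v
  proof (rule ccontr)
    assume h: "\<not> \<phi> v \<ge> \<phi> u"
    show False
    proof (cases "u < v")
      case True
      define w where "w = max (v+1) ((v * \<phi> u - u * \<phi> v)/(\<phi> u - \<phi> v) + 1)"
      have wv: "w > v" unfolding w_def by auto
      have w2: "w > (v * \<phi> u - u * \<phi> v)/(\<phi> u - \<phi> v)" unfolding w_def by auto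
      have "w * (\<phi> u - \<phi> v) > v * \<phi> u - u * \<phi> v" using w2 h by (simp add: divide_less_eq)
      moreover have "(w - u) * \<phi> v \<ge> (w - v) * \<phi> u + (v - u) * \<phi> w" using cc[OF True wv] .
      moreover have "(v-u) * \<phi> w \<ge> 0" using nn True by simp
      ultimately show False by (simp add: algebra_simps)
    next
      case False
      then have vu: "v < u" using h by (cases "u = v") auto
      define w where "w = min (v-1) ((v * \<phi> u - u * \<phi> v)/(\<phi> u - \<phi> v) - 1)"
      have wv: "w < v" unfolding w_def by auto
      have w2: "w < (v * \<phi> u - u * \<phi> v)/(\<phi> u - \<phi> v)" unfolding w_def by auto
      have "w * (\<phi> u - \<phi> v) < v * \<phi> u - u * \<phi> v" using w2 h by (simp add: less_divide_eq)
      moreover have "(u - w) * \<phi> v \<ge> (u - v) * \<phi> w + (v - w) * \<phi> u" using cc[OF wv vu] .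
      moreover have "(u-v) * \<phi> w \<ge> 0" using nn vu by simp
      ultimately show False by (simp add: algebra_simps)
    qed
  qed
  show ?thesis using le[of u v] le[of v u] by simp
qed

definition Gf :: "real \<Rightarrow> real \<Rightarrow> real \<Rightarrow> real \<Rightarrow> real \<Rightarrow> real \<Rightarrow> real \<Rightarrow> real \<Rightarrow> real" where
  "Gf a gy gy' s K L n N =
    (let Lp = s + N + a + K/(2 * (N+a));
         b = s * (Lp - gy - N)/Lp; dd = sqrt(s * (K + 2 * b * (n-a))/(L-s))
     in (N+gy)/(N+gy-s) * (2 * s * dd + dd^2) + s * max 0 ((Lp^2 - (gy'+N)^2)/(N+gy-s)))"

locale AS =
  fixes g :: "'a::complete_space \<Rightarrow> real"
  assumes geo: "geodesic_space TYPE('a)" and curv: "curv_nonneg TYPE('a)"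
    and lip: "\<And>x y. \<bar>g x - g y\<bar> \<le> dist x y" and aff: "affine_fun g"
begin

lemma curvI:
  fixes \<sigma> :: "real \<Rightarrow> 'a" and p :: 'a
  assumes "unit_segment \<sigma> L" "0 \<le> t" "t \<le> L"
  shows "L * (dist p (\<sigma> t))\<^sup>2 \<ge> (L - t) * (dist p (\<sigma> 0))\<^sup>2 + t * (dist p (\<sigma> L))\<^sup>2 - t * (L - t) * L"
  using curv assms unfolding curv_nonneg_def by auto

lemma geoE:
  fixes x y :: 'a
  obtains \<sigma> where "unit_segment \<sigma> (dist x y)" "\<sigma> 0 = x" "\<sigma> (dist x y) = y"
  using geo unfolding geodesic_space_def by blast

lemma seg_dist:
  fixes \<sigma> :: "real \<Rightarrow> 'a"
  assumes "unit_segment \<sigma> L" "0 \<le> u" "u \<le> L" "0 \<le> v" "v \<le> L"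
  shows "dist (\<sigma> u) (\<sigma> v) = \<bar>u - v\<bar>"
  using assms unfolding unit_segment_def by auto

lemma aff_seg:
  fixes \<sigma> :: "real \<Rightarrow> 'a"
  assumes "unit_segment \<sigma> L" "0 < L" "0 \<le> u" "u \<le> L"
  shows "g (\<sigma> u) = g (\<sigma> 0) + u / L * (g (\<sigma> L) - g (\<sigma> 0))"
proof -
  have L: "0 \<le> L" using assms by simp
  have "u / L \<in> {0..1}" using assms by auto
  then have "g (\<sigma> ((1 - u/L) * 0 + (u/L) * L)) = (1 - u/L) * g (\<sigma> 0) + (u/L) * g (\<sigma> L)"
    using aff assms(1) L unfolding affine_fun_def by (metis atLeastAtMost_iff order_refl)
  moreover have "(1 - u/L) * 0 + (u/L) * L = u" using assms by simp
  ultimately show ?thesis by (simp add: algebra_simps)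
qed

lemma line_seg:
  fixes \<eta> :: "real \<Rightarrow> 'a"
  assumes "unit_line \<eta>" "t1 \<le> t2"
  shows "unit_segment (\<lambda>u. \<eta> (t1 + u)) (t2 - t1)"
  using assms unfolding unit_line_def unit_segment_def by auto

lemma flat:
  fixes \<eta> :: "real \<Rightarrow> 'a" and p :: 'a
  assumes l: "unit_line \<eta>" and gl: "\<And>t. g (\<eta> t) = t + c"
  shows "\<exists>K\<ge>0. \<forall>t. (dist p (\<eta> t))\<^sup>2 = (t + c - g p)\<^sup>2 + K"
proof -
  define \<phi> where "\<phi> t = (dist p (\<eta> t))\<^sup>2 - (t + c - g p)\<^sup>2" for t
  have nn: "\<phi> t \<ge> 0" for t
  proof -
    have "\<bar>t + c - g p\<bar> \<le> dist p (\<eta> t)" using lip[of "\<eta> t" p] gl[of t] by (simp add: dist_commute)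
    then have "(t + c - g p)\<^sup>2 \<le> (dist p (\<eta> t))\<^sup>2"
      by (metis abs_ge_zero power2_abs power_mono)
    then show ?thesis unfolding \<phi>_def by simp
  qed
  have cc: "(t2 - t1) * \<phi> t \<ge> (t2 - t) * \<phi> t1 + (t - t1) * \<phi> t2" if "t1 < t" "t < t2" for t1 t t2
  proof -
    have "(t2 - t1) * (dist p (\<eta> (t1 + (t - t1))))\<^sup>2 \<ge> (t2 - t1 - (t - t1)) * (dist p (\<eta> (t1 + 0)))\<^sup>2
       + (t - t1) * (dist p (\<eta> (t1 + (t2 - t1))))\<^sup>2 - (t - t1) * (t2 - t1 - (t - t1)) * (t2 - t1)"
      using curvI[OF line_seg[OF l, of t1 t2], of "t - t1" p] that by simp
    then have A: "(t2 - t1) * (dist p (\<eta> t))\<^sup>2 \<ge> (t2 - t) * (dist p (\<eta> t1))\<^sup>2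
       + (t - t1) * (dist p (\<eta> t2))\<^sup>2 - (t - t1) * (t2 - t) * (t2 - t1)" by simp
    have B: "(t2 - t1) * (t + c - g p)\<^sup>2 = (t2 - t) * (t1 + c - g p)\<^sup>2
       + (t - t1) * (t2 + c - g p)\<^sup>2 - (t - t1) * (t2 - t) * (t2 - t1)"
      by (simp add: power2_eq_square algebra_simps)
    show ?thesis unfolding \<phi>_def using A B by (simp add: algebra_simps)
  qed
  have e: "\<phi> t = \<phi> 0" for t by (rule concave_nonneg_const[OF cc nn])
  have "(dist p (\<eta> t))\<^sup>2 = (t + c - g p)\<^sup>2 + \<phi> 0" for t
    using e[of t] unfolding \<phi>_def by linarith
  then show ?thesis using nn[of 0] by blast
qed


lemma lipd: "g u - g v \<le> dist u v" "g v - g u \<le> dist u v"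
  using lip[of u v] by (auto simp: dist_commute)

lemma sq_le_dist: "0 \<le> g u - g v \<Longrightarrow> (g u - g v)\<^sup>2 \<le> (dist u v)\<^sup>2"
  using lipd[of u v] by (simp add: power_mono)

lemma close_N:
  fixes \<gamma> \<sigma> :: "real \<Rightarrow> 'a" and x y' :: 'a
  assumes gl: "\<And>t. g (\<gamma> t) = t"
   and K: "K \<ge> 0" "\<And>t. (dist x (\<gamma> t))\<^sup>2 = (t - g x)\<^sup>2 + K"
   and s: "0 \<le> s"
   and \<sigma>: "unit_segment \<sigma> L" "\<sigma> 0 = x" "\<sigma> L = \<gamma> n" and sL: "s < L"
   and n: "n \<ge> g x + 2 * s"
   and y'd: "dist x y' = s"
   and N: "N + g x > 0" "N + g (\<sigma> s) > s" "g y' + N \<ge> 0"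
  shows "(dist (\<sigma> s) y')\<^sup>2 \<le> Gf (g x) (g (\<sigma> s)) (g y') s K L n N"
proof -
  define a where "a = g x"
  define y where "y = \<sigma> s"
  define gy where "gy = g y"
  define gy' where "gy' = g y'"
  define \<Lambda>p where "\<Lambda>p = s + N + a + K/(2 * (N+a))"
  define \<beta> where "\<beta> = s * (\<Lambda>p - gy - N)/\<Lambda>p"
  define \<delta>b where "\<delta>b = sqrt(s * (K + 2 * \<beta>*(n-a))/(L-s))"
  have L0: "L > 0" using sL s by simp
  have Ld: "L = dist x (\<gamma> n)" using \<sigma> unfolding unit_segment_def
    by (metis L0 atLeastAtMost_iff abs_of_nonneg diff_zero less_eq_real_def order_refl dist_commute)
  have LL: "L\<^sup>2 = (n - a)\<^sup>2 + K" using K(2)[of n] Ld a_def by simp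
  have dxy: "dist x y = s" using seg_dist[OF \<sigma>(1), of 0 s] \<sigma>(2) s sL y_def by simp
  have gy: "gy = a + s / L * (n - a)" using aff_seg[OF \<sigma>(1) L0, of s] s sL \<sigma> gl y_def gy_def a_def by simp
  have gyle: "gy \<le> a + s" using lipd(1)[of y x] dxy gy_def a_def by (simp add: dist_commute)
  have gy'le: "gy' \<le> a + s" using lipd(1)[of y' x] y'd gy'_def a_def by (simp add: dist_commute)
  define z where "z = \<gamma> (-N)"
  obtain \<rho> where \<rho>: "unit_segment \<rho> (dist y z)" "\<rho> 0 = y" "\<rho> (dist y z) = z" by (rule geoE)
  define \<Lambda> where "\<Lambda> = dist y z"
  have gz: "g z = -N" using gl z_def by simp
  have F1: "\<Lambda> \<ge> N + gy" using lipd(1)[of y z] gz gy_def \<Lambda>_def by simp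
  have Ns: "N + gy > s" using N(2) gy_def y_def by simp
  have \<Lambda>s: "\<Lambda> > s" using F1 Ns by simp
  define R where "R = dist x z"
  have RR: "R\<^sup>2 = (N + a)\<^sup>2 + K" using K(2)[of "-N"] R_def z_def a_def by (simp add: power2_eq_square algebra_simps)
  have Na: "N + a > 0" using N(1) a_def by simp
  have F3: "R \<le> N + a + K/(2 * (N+a))"
  proof -
    have e: "2 * (N + a) * (K/(2 * (N+a))) = K" using Na by simp
    have "(N + a + K/(2 * (N+a)))\<^sup>2 = (N+a)\<^sup>2 + 2 * (N + a) * (K/(2 * (N+a))) + (K/(2 * (N+a)))\<^sup>2"
      by (simp only: power2_sum)
    then have "R\<^sup>2 \<le> (N + a + K/(2 * (N+a)))\<^sup>2"
      unfolding RR e by simp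
    moreover have "N + a + K/(2 * (N+a)) \<ge> 0" using Na K(1) by simp
    ultimately show ?thesis using power2_le_imp_le by blast
  qed
  have F2: "\<Lambda> \<le> \<Lambda>p"
  proof -
    have "\<Lambda> \<le> dist y x + R" unfolding \<Lambda>_def R_def by (rule dist_triangle)
    then show ?thesis using dxy F3 unfolding \<Lambda>p_def by (simp add: dist_commute)
  qed
  have \<Lambda>p0: "\<Lambda>p > 0" using F2 \<Lambda>s s by simp
  define w where "w = \<rho> s"
  have F4: "g w = gy + s / \<Lambda> * (-N - gy)"
    using aff_seg[OF \<rho>(1), of s] \<Lambda>s s \<rho> gz w_def gy_def \<Lambda>_def by (cases "y = z") auto
  have F5: "g w - a \<le> \<beta>"
  proof -
    have "s * (gy + N) / \<Lambda>p \<le> s * (gy + N) / \<Lambda>"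
      using F2 \<Lambda>s s Ns by (intro divide_left_mono) auto
    moreover have "g w = gy - s * (gy + N) / \<Lambda>" using F4 \<Lambda>s s by (simp add: field_simps)
    ultimately have "g w - a \<le> gy - a - s * (gy + N) / \<Lambda>p" by linarith
    also have "\<dots> \<le> s - s * (gy + N) / \<Lambda>p" using gyle by simp
    also have "\<dots> = \<beta>" unfolding \<beta>_def using \<Lambda>p0 by (simp add: field_simps)
    finally show ?thesis .
  qed
  have \<beta>0: "\<beta> \<ge> 0"
  proof -
    have "K/(2 * (N+a)) \<ge> 0" using Na K(1) by simp
    then have "\<Lambda>p - gy - N \<ge> 0" using gyle unfolding \<Lambda>p_def by linarith
    then show ?thesis unfolding \<beta>_def using s \<Lambda>p0 by simp
  qed
  define \<delta> where "\<delta> = dist w x"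
  have dwy: "dist w y = s" using seg_dist[OF \<rho>(1), of s 0] \<rho>(2) s \<Lambda>s w_def \<Lambda>_def by simp
  have gw_le: "g w \<le> a + 2 * s" using lipd(1)[of w y] dwy gyle gy_def by simp
  have na: "n - a \<ge> 0" using n s a_def by simp
  have F6: "(L - s) * \<delta>\<^sup>2 \<le> s * (K + 2 * \<beta> * (n - a))"
  proof -
    have c: "L * (dist w (\<sigma> s))\<^sup>2 \<ge> (L - s) * (dist w (\<sigma> 0))\<^sup>2 + s * (dist w (\<sigma> L))\<^sup>2 - s * (L - s) * L"
      using curvI[OF \<sigma>(1), of s w] s sL by simp
    have d1: "dist w (\<sigma> s) = s" using dwy y_def by simp
    have d2: "(dist w (\<sigma> L))\<^sup>2 \<ge> (n - g w)\<^sup>2"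
      using sq_le_dist[of "\<sigma> L" w] \<sigma>(3) gl gw_le n a_def by (simp add: dist_commute)
    have "(L - s) * \<delta>\<^sup>2 \<le> s * (L\<^sup>2 - (n - g w)\<^sup>2)"
    proof -
      have "s * (n - g w)\<^sup>2 \<le> s * (dist w (\<sigma> L))\<^sup>2" using d2 s by (simp add: mult_left_mono)
      then show ?thesis using c d1 \<sigma>(2) unfolding \<delta>_def by (simp add: power2_eq_square algebra_simps)
    qed
    also have "\<dots> = s * (K + (g w - a) * (2 * n - a - g w))" unfolding LL by (simp add: power2_eq_square algebra_simps)
    also have "\<dots> \<le> s * (K + 2 * \<beta> * (n - a))"
    proof -
      have "(g w - a) * (2 * n - a - g w) \<le> 2 * \<beta> * (n - a)"
      proof (cases "g w \<ge> a")
        case True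
        have "(g w - a) * (2 * n - a - g w) \<le> \<beta> * (2 * (n - a))"
          using True F5 gw_le n a_def s by (intro mult_mono) auto
        then show ?thesis by (simp add: algebra_simps)
      next
        case False
        have "(g w - a) * (2 * n - a - g w) \<le> 0" using False gw_le n s a_def
          by (intro mult_nonpos_nonneg) auto
        also have "0 \<le> 2 * \<beta> * (n - a)" using \<beta>0 na by simp
        finally show ?thesis .
      qed
      then show ?thesis using s by (simp add: mult_left_mono)
    qed
    finally show ?thesis .
  qed
  have \<delta>le: "\<delta> \<le> \<delta>b"
  proof -
    have "\<delta>\<^sup>2 \<le> s * (K + 2 * \<beta> * (n - a)) / (L - s)" using F6 sL by (simp add: field_simps)
    then have "sqrt (\<delta>\<^sup>2) \<le> \<delta>b" unfolding \<delta>b_def by (rule real_sqrt_le_mono)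
    then show ?thesis unfolding \<delta>_def by simp
  qed
  define d where "d = dist y y'"
  have F7: "(\<Lambda> - s) * d\<^sup>2 \<le> \<Lambda> * (2 * s * \<delta> + \<delta>\<^sup>2) + s * (\<Lambda>\<^sup>2 - (gy' + N)\<^sup>2)"
  proof -
    have c: "\<Lambda> * (dist y' (\<rho> s))\<^sup>2 \<ge> (\<Lambda> - s) * (dist y' (\<rho> 0))\<^sup>2 + s * (dist y' (\<rho> \<Lambda>))\<^sup>2 - s * (\<Lambda> - s) * \<Lambda>"
      using curvI[OF \<rho>(1), of s y'] s \<Lambda>s \<Lambda>_def by simp
    have D: "dist y' (\<rho> s) \<le> s + \<delta>"
      using dist_triangle[of y' "\<rho> s" x] y'd unfolding \<delta>_def w_def by (simp add: dist_commute)
    have D2: "(dist y' (\<rho> s))\<^sup>2 \<le> (s + \<delta>)\<^sup>2" using D by (simp add: power_mono)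
    have Z: "(dist y' (\<rho> \<Lambda>))\<^sup>2 \<ge> (gy' + N)\<^sup>2"
      using sq_le_dist[of y' z] \<rho>(3) gz N(3) gy'_def \<Lambda>_def by (simp add: dist_commute)
    have "\<Lambda> * (dist y' (\<rho> s))\<^sup>2 \<le> \<Lambda> * (s + \<delta>)\<^sup>2" using D2 \<Lambda>s s by (simp add: mult_left_mono)
    moreover have "s * (gy' + N)\<^sup>2 \<le> s * (dist y' (\<rho> \<Lambda>))\<^sup>2" using Z s by (simp add: mult_left_mono)
    ultimately show ?thesis using c \<rho>(2) unfolding d_def by (simp add: dist_commute power2_eq_square algebra_simps)
  qed
  have d2: "d\<^sup>2 \<le> \<Lambda>/(\<Lambda> - s) * (2 * s * \<delta> + \<delta>\<^sup>2) + s * ((\<Lambda>\<^sup>2 - (gy' + N)\<^sup>2)/(\<Lambda> - s))"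
  proof -
    have p: "\<Lambda> - s > 0" using \<Lambda>s by simp
    have "d\<^sup>2 \<le> (\<Lambda> * (2 * s * \<delta> + \<delta>\<^sup>2) + s * (\<Lambda>\<^sup>2 - (gy' + N)\<^sup>2)) / (\<Lambda> - s)"
      using F7 p by (simp add: pos_le_divide_eq mult.commute)
    also have "\<dots> = \<Lambda>/(\<Lambda> - s) * (2 * s * \<delta> + \<delta>\<^sup>2) + s * ((\<Lambda>\<^sup>2 - (gy' + N)\<^sup>2)/(\<Lambda> - s))"
      by (simp add: add_divide_distrib)
    finally show ?thesis .
  qed
  have t1: "\<Lambda>/(\<Lambda> - s) \<le> (N+gy)/(N+gy-s)"
  proof -
    have "(N+gy) * s \<le> \<Lambda> * s" using F1 s by (rule mult_right_mono)
    then show ?thesis using F1 Ns s by (simp add: field_simps)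
  qed
  have t2: "2 * s * \<delta> + \<delta>\<^sup>2 \<le> 2 * s * \<delta>b + \<delta>b\<^sup>2"
    using \<delta>le s by (intro add_mono mult_left_mono power_mono) (auto simp: \<delta>_def)
  have t3: "(\<Lambda>\<^sup>2 - (gy' + N)\<^sup>2)/(\<Lambda> - s) \<le> max 0 ((\<Lambda>p\<^sup>2 - (gy'+N)\<^sup>2)/(N+gy-s))"
  proof (cases "\<Lambda>\<^sup>2 - (gy' + N)\<^sup>2 \<le> 0")
    case True
    have "(\<Lambda>\<^sup>2 - (gy' + N)\<^sup>2)/(\<Lambda> - s) \<le> 0" using True \<Lambda>s by (intro divide_nonpos_pos) auto
    then show ?thesis by linarith
  next
    case False
    have "\<Lambda>\<^sup>2 \<le> \<Lambda>p\<^sup>2" using F2 \<Lambda>s s by (simp add: power_mono)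
    then have "(\<Lambda>\<^sup>2 - (gy' + N)\<^sup>2)/(\<Lambda> - s) \<le> (\<Lambda>p\<^sup>2 - (gy' + N)\<^sup>2)/(\<Lambda> - s)"
      using \<Lambda>s by (simp add: divide_right_mono)
    also have "\<dots> \<le> (\<Lambda>p\<^sup>2 - (gy' + N)\<^sup>2)/(N + gy - s)"
      using False \<open>\<Lambda>\<^sup>2 \<le> \<Lambda>p\<^sup>2\<close> F1 Ns by (intro divide_left_mono) auto
    finally show ?thesis by simp
  qed
  have "d\<^sup>2 \<le> (N+gy)/(N+gy-s) * (2 * s * \<delta>b + \<delta>b\<^sup>2) + s * max 0 ((\<Lambda>p\<^sup>2 - (gy'+N)\<^sup>2)/(N+gy-s))"
  proof -
    have "\<Lambda>/(\<Lambda> - s) * (2 * s * \<delta> + \<delta>\<^sup>2) \<le> (N+gy)/(N+gy-s) * (2 * s * \<delta>b + \<delta>b\<^sup>2)"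
      using t1 t2 \<Lambda>s s Ns by (intro mult_mono) (auto simp: \<delta>_def)
    moreover have "s * ((\<Lambda>\<^sup>2 - (gy' + N)\<^sup>2)/(\<Lambda> - s)) \<le> s * max 0 ((\<Lambda>p\<^sup>2 - (gy'+N)\<^sup>2)/(N+gy-s))"
      using t3 s by (rule mult_left_mono)
    ultimately show ?thesis using d2 by linarith
  qed
  then show ?thesis unfolding d_def Gf_def Let_def \<delta>b_def \<beta>_def \<Lambda>p_def a_def gy_def gy'_def y_def .
qed


lemma Gf_lim:
  assumes "gy' \<le> a + s" "s < L" "0 \<le> s" "0 \<le> K"
  shows "((\<lambda>N. Gf a gy gy' s K L n N) \<longlongrightarrow>
     2 * s * sqrt (s * K / (L - s)) + s * K / (L - s) + 2 * s * (s + a - gy')) at_top"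
proof -
  define Lp where "Lp N = s + N + a + K/(2 * (N+a))" for N :: real
  have b: "((\<lambda>N. s * (Lp N - gy - N) / Lp N) \<longlongrightarrow> 0) at_top"
    unfolding Lp_def by real_asymp
  have q: "((\<lambda>N::real. (N+gy)/(N+gy-s)) \<longlongrightarrow> 1) at_top" by real_asymp
  have r: "((\<lambda>N. (Lp N ^ 2 - (gy'+N) ^ 2)/(N+gy-s)) \<longlongrightarrow> 2 * (s + a - gy')) at_top"
    unfolding Lp_def by real_asymp
  have dd: "((\<lambda>N. sqrt (s * (K + 2 * (s * (Lp N - gy - N) / Lp N) * (n-a))/(L-s))) \<longlongrightarrow> sqrt (s * (K + 2 * 0 * (n-a))/(L-s))) at_top"
    by (intro tendsto_intros b) (use assms in auto)
  have "((\<lambda>N. Gf a gy gy' s K L n N) \<longlongrightarrow>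
     1 * (2 * s * sqrt (s * (K + 2 * 0 * (n-a))/(L-s)) + (sqrt (s * (K + 2 * 0 * (n-a))/(L-s))) ^ 2)
       + s * max 0 (2 * (s + a - gy'))) at_top"
    unfolding Gf_def Let_def Lp_def[symmetric]
    by (intro tendsto_intros q dd r)
  moreover have "s * K / (L - s) \<ge> 0" using assms by simp
  ultimately show ?thesis using assms by (simp add: max_def algebra_simps)
qed

lemma close:
  fixes \<gamma> \<sigma> :: "real \<Rightarrow> 'a" and x y' :: 'a
  assumes gl: "\<And>t. g (\<gamma> t) = t"
   and K: "K \<ge> 0" "\<And>t. (dist x (\<gamma> t))\<^sup>2 = (t - g x)\<^sup>2 + K"
   and s: "0 \<le> s"
   and \<sigma>: "unit_segment \<sigma> L" "\<sigma> 0 = x" "\<sigma> L = \<gamma> n" and sL: "s < L"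
   and n: "n \<ge> g x + 2 * s"
   and y'd: "dist x y' = s"
  shows "(dist (\<sigma> s) y')\<^sup>2 \<le> 2 * s * sqrt (s * K / (L - s)) + s * K / (L - s) + 2 * s * (s + g x - g y')"
proof -
  have gy'le: "g y' \<le> g x + s" using lipd(1)[of y' x] y'd by (simp add: dist_commute)
  have ev: "eventually (\<lambda>N. (dist (\<sigma> s) y')\<^sup>2 \<le> Gf (g x) (g (\<sigma> s)) (g y') s K L n N) at_top"
  proof -
    have "eventually (\<lambda>N. N \<ge> \<bar>g x\<bar> + \<bar>g (\<sigma> s)\<bar> + \<bar>g y'\<bar> + s + 1) at_top"
      by (rule eventually_ge_at_top)
    then show ?thesis
    proof eventually_elim
      case (elim N)
      show ?case by (rule close_N[OF gl K s \<sigma> sL n y'd]) (use elim s in auto)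
    qed
  qed
  show ?thesis
    by (rule tendsto_le[OF _ Gf_lim[OF gy'le sL s K(1)] tendsto_const ev]) auto
qed


lemma g_tendsto:
  assumes "(f \<longlongrightarrow> l) F"
  shows "((\<lambda>n. g (f n)) \<longlongrightarrow> g l) F"
  by (rule metric_tendsto_imp_tendsto[OF assms]) (auto simp: dist_real_def lip)

lemma fwd:
  fixes \<gamma> :: "real \<Rightarrow> 'a" and x :: 'a
  assumes \<gamma>l: "unit_line \<gamma>" and gl: "\<And>t. g (\<gamma> t) = t"
  shows "\<exists>F. F 0 = x \<and> (\<forall>s\<ge>0. g (F s) = g x + s) \<and> (\<forall>s\<ge>0. \<forall>s'\<ge>0. dist (F s) (F s') = \<bar>s - s'\<bar>)"
proof -
  define a where "a = g x"
  obtain K where K0: "K \<ge> 0" and K1: "\<And>t. (dist x (\<gamma> t))\<^sup>2 = (t + 0 - g x)\<^sup>2 + K"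
    using flat[OF \<gamma>l, of 0 x] gl by auto
  have K: "\<And>t. (dist x (\<gamma> t))\<^sup>2 = (t - g x)\<^sup>2 + K" using K1 by simp
  define H where "H = sqrt K"
  define Lf where "Lf n = dist x (\<gamma> (real n))" for n
  define \<sigma> where "\<sigma> n = (SOME \<sigma>. unit_segment \<sigma> (Lf n) \<and> \<sigma> 0 = x \<and> \<sigma> (Lf n) = \<gamma> (real n))" for n
  have \<sigma>: "unit_segment (\<sigma> n) (Lf n) \<and> \<sigma> n 0 = x \<and> \<sigma> n (Lf n) = \<gamma> (real n)" for n
  proof -
    obtain \<tau> where "unit_segment \<tau> (dist x (\<gamma> (real n)))" "\<tau> 0 = x" "\<tau> (dist x (\<gamma> (real n))) = \<gamma> (real n)"
      by (rule geoE)
    then show ?thesis unfolding \<sigma>_def Lf_def by (rule someI[where x = \<tau>, OF conjI[OF _ conjI]])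
  qed
  have Lsq: "Lf n = sqrt ((real n - a)\<^sup>2 + K)" for n
    using K[of "real n"] unfolding Lf_def a_def by (metis zero_le_dist real_sqrt_unique)
  have Llow: "Lf n \<ge> real n - a" for n
    using lipd(1)[of "\<gamma> (real n)" x] gl unfolding Lf_def a_def by (simp add: dist_commute)
  have Lup: "Lf n \<le> real n - a + H" if "real n \<ge> a" for n
  proof -
    have H0: "H \<ge> 0" unfolding H_def using K0 by simp
    have HH: "H\<^sup>2 = K" unfolding H_def using K0 by simp
    have "(Lf n)\<^sup>2 = (real n - a)\<^sup>2 + H\<^sup>2" using K[of "real n"] HH unfolding Lf_def a_def by simp
    also have "\<dots> \<le> (real n - a)\<^sup>2 + 2 * (real n - a) * H + H\<^sup>2" using that H0 by simp
    also have "\<dots> = (real n - a + H)\<^sup>2" by (simp only: power2_sum)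
    finally have "(Lf n)\<^sup>2 \<le> (real n - a + H)\<^sup>2" .
    moreover have "0 \<le> real n - a + H" using that H0 by simp
    ultimately show ?thesis by (rule power2_le_imp_le)
  qed
  define Y where "Y s n = \<sigma> n s" for s n
  have Ydist: "dist x (Y s n) = s" if "0 \<le> s" "s \<le> Lf n" for s n
    using seg_dist[of "\<sigma> n" "Lf n" 0 s] \<sigma>[of n] that unfolding Y_def by auto
  have Yg: "g (Y s n) = a + s / Lf n * (real n - a)" if "0 \<le> s" "s \<le> Lf n" "0 < Lf n" for s n
    using aff_seg[of "\<sigma> n" "Lf n" s] \<sigma>[of n] that gl unfolding Y_def a_def by auto
  have Ypair: "dist (Y s n) (Y s' n) = \<bar>s - s'\<bar>" if "0 \<le> s" "s \<le> Lf n" "0 \<le> s'" "s' \<le> Lf n" for s s' n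
    using seg_dist[of "\<sigma> n" "Lf n" s s'] \<sigma>[of n] that unfolding Y_def by auto
  have Cau: "Cauchy (Y s)" if s: "s \<ge> 0" for s
  proof -
    define E where "E n = 2 * s * sqrt (s * K / (real n - a - s)) + s * K / (real n - a - s) + 2 * s * (s * H / (real n - a))" for n
    have E0: "E \<longlonglongrightarrow> 0"
    proof -
      have q1: "(\<lambda>n. s * K / (real n - a - s)) \<longlonglongrightarrow> 0" by real_asymp
      have q2: "(\<lambda>n. s * H / (real n - a)) \<longlonglongrightarrow> 0" by real_asymp
      have "E \<longlonglongrightarrow> 2 * s * sqrt 0 + 0 + 2 * s * 0"
        unfolding E_def by (intro tendsto_intros q1 q2)
      then show ?thesis by simp
    qed
    have bound: "(dist (Y s n) (Y s m))\<^sup>2 \<le> E n + E m"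
      if n: "real n \<ge> a + 2 * s + 1" and m: "real m \<ge> a + 2 * s + 1" for n m
    proof -
      have sLn: "s < Lf n" using Llow[of n] n s by simp
      have sLm: "s < Lf m" using Llow[of m] m s by simp
      have c: "(dist (\<sigma> n s) (Y s m))\<^sup>2 \<le> 2 * s * sqrt (s * K / (Lf n - s)) + s * K / (Lf n - s) + 2 * s * (s + g x - g (Y s m))"
      proof -
        have \<sigma>n: "unit_segment (\<sigma> n) (Lf n)" "\<sigma> n 0 = x" "\<sigma> n (Lf n) = \<gamma> (real n)" using \<sigma>[of n] by auto
        have nge: "real n \<ge> g x + 2 * s" using n a_def by simp
        have yd: "dist x (Y s m) = s" using Ydist[of s m] sLm s by simp
        show ?thesis by (rule close[OF gl K0 K s \<sigma>n sLn nge yd])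
      qed
      have e1: "s * K / (Lf n - s) \<le> s * K / (real n - a - s)"
        using Llow[of n] n s K0 by (intro frac_le) auto
      have e2: "sqrt (s * K / (Lf n - s)) \<le> sqrt (s * K / (real n - a - s))"
        using e1 by simp
      have e3: "s + g x - g (Y s m) \<le> s * H / (real m - a)"
      proof -
        have Lm0: "Lf m > 0" using sLm s by simp
        have "s + g x - g (Y s m) = s * (Lf m - (real m - a)) / Lf m"
          using Yg[of s m] s sLm Lm0 unfolding a_def by (simp add: field_simps)
        also have "\<dots> \<le> s * H / Lf m"
        proof -
          have "Lf m - (real m - a) \<le> H" using Lup[of m] m s by simp
          then have "s * (Lf m - (real m - a)) \<le> s * H" using s by (rule mult_left_mono)
          then show ?thesis using Lm0 by (simp add: divide_right_mono)
        qed
        also have "\<dots> \<le> s * H / (real m - a)"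
          using Llow[of m] m s K0 unfolding H_def by (intro frac_le) auto
        finally show ?thesis .
      qed
      have "(dist (Y s n) (Y s m))\<^sup>2 \<le> 2 * s * sqrt (s * K / (real n - a - s)) + s * K / (real n - a - s) + 2 * s * (s * H / (real m - a))"
      proof -
        have A: "2 * s * sqrt (s * K / (Lf n - s)) \<le> 2 * s * sqrt (s * K / (real n - a - s))"
          using e2 s by (intro mult_left_mono) auto
        have B: "2 * s * (s + g x - g (Y s m)) \<le> 2 * s * (s * H / (real m - a))"
          using e3 s by (intro mult_left_mono) auto
        show ?thesis using c A B e1 unfolding Y_def by linarith
      qed
      also have "\<dots> \<le> E n + E m"
      proof -
        have "0 \<le> 2 * s * sqrt (s * K / (real m - a - s)) + s * K / (real m - a - s)"
          using m s K0 by simp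
        moreover have "0 \<le> 2 * s * (s * H / (real n - a))" using n s K0 unfolding H_def by simp
        ultimately show ?thesis unfolding E_def by linarith
      qed
      finally show ?thesis .
    qed
    show ?thesis
    proof (rule metric_CauchyI)
      fix e :: real assume e: "e > 0"
      have "eventually (\<lambda>n. E n < e\<^sup>2 / 2 \<and> real n \<ge> a + 2 * s + 1) sequentially"
      proof (rule eventually_conj)
        show "eventually (\<lambda>n. E n < e\<^sup>2 / 2) sequentially"
        proof -
          have u: "e\<^sup>2 / 2 > 0" using e by simp
          have "\<forall>u>0. eventually (\<lambda>n. E n < u) sequentially" using E0 by (simp add: order_tendsto_iff)
          then show ?thesis using u by blast
        qed
        show "eventually (\<lambda>n. real n \<ge> a + 2 * s + 1) sequentially"
          by (rule eventually_sequentiallyI[of "nat \<lceil>a + 2 * s + 1\<rceil>"]) linarith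
      qed
      then obtain M where M: "\<And>n. n \<ge> M \<Longrightarrow> E n < e\<^sup>2 / 2 \<and> real n \<ge> a + 2 * s + 1"
        unfolding eventually_sequentially by blast
      show "\<exists>M. \<forall>m\<ge>M. \<forall>n\<ge>M. dist (Y s m) (Y s n) < e"
      proof (intro exI allI impI)
        fix m n assume "m \<ge> M" "n \<ge> M"
        then have "(dist (Y s m) (Y s n))\<^sup>2 < e\<^sup>2" using bound[of m n] M[of m] M[of n] by simp
        then show "dist (Y s m) (Y s n) < e" using e by (simp add: power_less_imp_less_base)
      qed
    qed
  qed
  define F where "F s = lim (Y s)" for s
  have FY: "Y s \<longlonglongrightarrow> F s" if "s \<ge> 0" for s
    using Cau[OF that] unfolding F_def by (simp add: Cauchy_convergent_iff convergent_LIMSEQ_iff)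
  have evL: "eventually (\<lambda>n. s \<le> Lf n \<and> 0 < Lf n) sequentially" if "s \<ge> 0" for s
  proof -
    have "eventually (\<lambda>n. real n \<ge> a + s + 1) sequentially"
      by (rule eventually_sequentiallyI[of "nat \<lceil>a + s + 1\<rceil>"]) linarith
    moreover have "s \<le> Lf n \<and> 0 < Lf n" if "real n \<ge> a + s + 1" for n
      using Llow[of n] that \<open>s \<ge> 0\<close> by linarith
    ultimately show ?thesis by (rule eventually_mono)
  qed
  have "F 0 = x"
  proof -
    have "Y 0 = (\<lambda>n. x)" using \<sigma> unfolding Y_def by auto
    then have "(\<lambda>n. x) \<longlonglongrightarrow> F 0" using FY[of 0] by simp
    then show ?thesis using LIMSEQ_unique[OF _ tendsto_const] by metis
  qed
  moreover have "g (F s) = g x + s" if s: "s \<ge> 0" for s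
  proof -
    have t1: "(\<lambda>n. g (Y s n)) \<longlonglongrightarrow> g (F s)" by (rule g_tendsto[OF FY[OF s]])
    have t2: "(\<lambda>n. a + s / sqrt ((real n - a)\<^sup>2 + K) * (real n - a)) \<longlonglongrightarrow> a + s" by real_asymp
    have "eventually (\<lambda>n. a + s / sqrt ((real n - a)\<^sup>2 + K) * (real n - a) = g (Y s n)) sequentially"
    proof (rule eventually_mono[OF evL[OF s]])
      fix n assume h: "s \<le> Lf n \<and> 0 < Lf n"
      have "g (Y s n) = a + s / Lf n * (real n - a)" using Yg[of s n] h s by blast
      then show "a + s / sqrt ((real n - a)\<^sup>2 + K) * (real n - a) = g (Y s n)" unfolding Lsq[of n] by simp
    qed
    then have "(\<lambda>n. g (Y s n)) \<longlonglongrightarrow> a + s" by (rule Lim_transform_eventually[OF t2])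
    then show ?thesis using t1 LIMSEQ_unique unfolding a_def by blast
  qed
  moreover have "dist (F s) (F s') = \<bar>s - s'\<bar>" if s: "s \<ge> 0" "s' \<ge> 0" for s s'
  proof -
    have t1: "(\<lambda>n. dist (Y s n) (Y s' n)) \<longlonglongrightarrow> dist (F s) (F s')" by (intro tendsto_intros FY s)
    have "eventually (\<lambda>n. \<bar>s - s'\<bar> = dist (Y s n) (Y s' n)) sequentially"
    proof (rule eventually_mono[OF eventually_conj[OF evL[OF s(1)] evL[OF s(2)]]])
      fix n assume h: "(s \<le> Lf n \<and> 0 < Lf n) \<and> (s' \<le> Lf n \<and> 0 < Lf n)"
      show "\<bar>s - s'\<bar> = dist (Y s n) (Y s' n)" using Ypair[of s n s'] h s by simp
    qed
    then have "(\<lambda>n. dist (Y s n) (Y s' n)) \<longlonglongrightarrow> \<bar>s - s'\<bar>" by (rule Lim_transform_eventually[OF tendsto_const])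
    then show ?thesis using t1 LIMSEQ_unique by blast
  qed
  ultimately show ?thesis by blast
qed


lemma neg_AS: "AS (\<lambda>x. - g x)"
proof
  show "geodesic_space TYPE('a)" by (rule geo)
  show "curv_nonneg TYPE('a)" by (rule curv)
  show "\<bar>- g x - - g y\<bar> \<le> dist x y" for x y using lip[of x y] by simp
  show "affine_fun (\<lambda>x. - g x)" using aff unfolding affine_fun_def by (simp add: algebra_simps)
qed

lemma line_through:
  fixes \<gamma> :: "real \<Rightarrow> 'a" and x :: 'a
  assumes \<gamma>l: "unit_line \<gamma>" and gl: "\<And>t. g (\<gamma> t) = t"
  shows "\<exists>\<eta>. unit_line \<eta> \<and> \<eta> 0 = x \<and> (\<forall>t. g (\<eta> t) = g x + t)"
proof -
  obtain F where F0: "F 0 = x" and Fg: "\<And>s. s \<ge> 0 \<Longrightarrow> g (F s) = g x + s"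
    and Fd: "\<And>s s'. s \<ge> 0 \<Longrightarrow> s' \<ge> 0 \<Longrightarrow> dist (F s) (F s') = \<bar>s - s'\<bar>"
    using fwd[OF \<gamma>l gl, of x] by blast
  interpret N: AS "\<lambda>x. - g x" by (rule neg_AS)
  have \<gamma>l': "unit_line (\<lambda>t. \<gamma> (- t))" using \<gamma>l unfolding unit_line_def by (metis minus_diff_eq abs_minus_commute diff_minus_eq_add uminus_add_conv_diff)
  obtain B where B0: "B 0 = x" and Bg: "\<And>s. s \<ge> 0 \<Longrightarrow> - g (B s) = - g x + s"
    and Bd: "\<And>s s'. s \<ge> 0 \<Longrightarrow> s' \<ge> 0 \<Longrightarrow> dist (B s) (B s') = \<bar>s - s'\<bar>"
    using N.fwd[OF \<gamma>l', of x] gl by auto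
  define \<eta> where "\<eta> t = (if t \<ge> 0 then F t else B (- t))" for t
  have g\<eta>: "g (\<eta> t) = g x + t" for t unfolding \<eta>_def using Fg Bg[of "-t"] by auto
  have mixed: "dist (\<eta> s) (\<eta> t) = \<bar>s - t\<bar>" if "s \<ge> 0" "t < 0" for s t
  proof -
    have "dist (\<eta> s) (\<eta> t) \<le> dist (\<eta> s) x + dist x (\<eta> t)" by (rule dist_triangle)
    also have "dist (\<eta> s) x = s" using Fd[of s 0] F0 that unfolding \<eta>_def by simp
    also have "dist x (\<eta> t) = - t" using Bd[of 0 "-t"] B0 that unfolding \<eta>_def by simp
    finally have le: "dist (\<eta> s) (\<eta> t) \<le> s - t" by simp
    have "g (\<eta> s) - g (\<eta> t) \<le> dist (\<eta> s) (\<eta> t)" by (rule lipd)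
    then have "s - t \<le> dist (\<eta> s) (\<eta> t)" using g\<eta>[of s] g\<eta>[of t] by simp
    then show ?thesis using le that by simp
  qed
  have "unit_line \<eta>"
    unfolding unit_line_def
  proof (intro allI)
    fix s t
    show "dist (\<eta> s) (\<eta> t) = \<bar>s - t\<bar>"
    proof (cases "s \<ge> 0"; cases "t \<ge> 0")
      assume "s \<ge> 0" "t \<ge> 0" then show ?thesis using Fd unfolding \<eta>_def by simp
    next
      assume "s \<ge> 0" "\<not> t \<ge> 0" then show ?thesis using mixed by simp
    next
      assume "\<not> s \<ge> 0" "t \<ge> 0" then show ?thesis using mixed[of t s] by (simp add: dist_commute abs_minus_commute)
    next
      assume "\<not> s \<ge> 0" "\<not> t \<ge> 0" then show ?thesis using Bd[of "-s" "-t"] unfolding \<eta>_def by (simp add: abs_minus_commute)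
    qed
  qed
  moreover have "\<eta> 0 = x" using F0 unfolding \<eta>_def by simp
  ultimately show ?thesis using g\<eta> by blast
qed

lemma two_lines:
  fixes \<eta>1 \<eta>2 :: "real \<Rightarrow> 'a"
  assumes l1: "unit_line \<eta>1" and g1: "\<And>t. g (\<eta>1 t) = t + c1"
    and l2: "unit_line \<eta>2" and g2: "\<And>t. g (\<eta>2 t) = t + c2"
  shows "\<exists>K. \<forall>s t. (dist (\<eta>1 s) (\<eta>2 t))\<^sup>2 = (t + c2 - s - c1)\<^sup>2 + K"
proof -
  obtain K2 where K2: "\<And>s. (dist (\<eta>2 0) (\<eta>1 s))\<^sup>2 = (s + c1 - g (\<eta>2 0))\<^sup>2 + K2"
    using flat[OF l1 g1, of "\<eta>2 0"] by blast
  have "(dist (\<eta>1 s) (\<eta>2 t))\<^sup>2 = (t + c2 - s - c1)\<^sup>2 + K2" for s t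
  proof -
    obtain K1 where K1: "\<And>t. (dist (\<eta>1 s) (\<eta>2 t))\<^sup>2 = (t + c2 - g (\<eta>1 s))\<^sup>2 + K1"
      using flat[OF l2 g2, of "\<eta>1 s"] by blast
    have "(c2 - g (\<eta>1 s))\<^sup>2 + K1 = (s + c1 - g (\<eta>2 0))\<^sup>2 + K2"
      using K1[of 0] K2[of s] by (simp add: dist_commute)
    then have "K1 = K2" using g1[of s] g2[of 0] by (simp add: power2_eq_square algebra_simps)
    then show ?thesis using K1[of t] g1[of s] by (simp add: algebra_simps)
  qed
  then show ?thesis by blast
qed

end


theorem lemma4p1:
  fixes f :: "'a::complete_space \<Rightarrow> real" and n :: nat and \<gamma> :: "real \<Rightarrow> 'a"
  assumes "Alex0 n TYPE('a)"
    and "lipschitz_fun f" and "affine_fun f"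
    and "unit_line \<gamma>"
    and "\<forall>t. ((\<lambda>t. f (\<gamma> t)) has_real_derivative lip_const f) (at t)"
    and "lip_const f > 0"
  shows "\<exists>(Z::'a set) dZ (\<Phi>::'a \<Rightarrow> 'a \<times> real). Metric_space Z dZ \<and>
           bij_betw \<Phi> UNIV (Z \<times> UNIV) \<and>
           (\<forall>x y. dist x y = sqrt ((dZ (fst (\<Phi> x)) (fst (\<Phi> y)))\<^sup>2 + (snd (\<Phi> x) - snd (\<Phi> y))\<^sup>2)) \<and>
           (\<forall>x. f x = lip_const f * snd (\<Phi> x))"
proof -
  note A = assms
  define c where "c = lip_const f"
  have c0: "c > 0" using A(6) c_def by simp
  have fl: "\<bar>f x - f y\<bar> \<le> c * dist x y" for x y
  proof (cases "x = y")
    case True then show ?thesis by simp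
  next
    case False
    obtain C where C: "\<And>x y. \<bar>f x - f y\<bar> \<le> C * dist x y" using A(2) unfolding lipschitz_fun_def by blast
    define S where "S = {\<bar>f x - f y\<bar> / dist x y | x y. x \<noteq> y}"
    have bdd: "bdd_above S" unfolding S_def bdd_above_def
      using C by (auto intro!: exI[of _ C] simp: divide_le_eq)
    have "\<bar>f x - f y\<bar> / dist x y \<in> S" using False unfolding S_def by blast
    then have "\<bar>f x - f y\<bar> / dist x y \<le> c" unfolding c_def lip_const_def S_def[symmetric]
      using bdd by (rule cSup_upper)
    then show ?thesis using False by (simp add: divide_le_eq mult.commute)
  qed
  have fg: "f (\<gamma> t) = f (\<gamma> 0) + c * t" for t
  proof -
    have "((\<lambda>t. f (\<gamma> t) - c * t) has_real_derivative 0) (at u)" for u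
    proof -
      have "((\<lambda>t. f (\<gamma> t) - c * t) has_real_derivative c - c) (at u)"
        using A(5) unfolding c_def[symmetric] by (intro derivative_intros) auto
      then show ?thesis by simp
    qed
    then have "f (\<gamma> t) - c * t = f (\<gamma> 0) - c * 0" using DERIV_isconst_all[of "\<lambda>t. f (\<gamma> t) - c * t" t 0] by blast
    then show ?thesis by simp
  qed
  define b where "b = f (\<gamma> 0) / c"
  define g where "g x = f x / c - b" for x
  have gl: "g (\<gamma> t) = t" for t unfolding g_def b_def using fg[of t] c0 by (simp add: field_simps)
  have glip: "\<bar>g x - g y\<bar> \<le> dist x y" for x y
  proof -
    have "\<bar>g x - g y\<bar> = \<bar>f x - f y\<bar> / c" unfolding g_def using c0 by (simp add: diff_divide_distrib[symmetric])
    also have "\<dots> \<le> dist x y" using fl[of x y] c0 by (simp add: divide_le_eq mult.commute)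
    finally show ?thesis .
  qed
  have gaff: "affine_fun g"
    using A(3) c0 unfolding affine_fun_def g_def by (simp add: field_simps)
  interpret AS g
    using A(1) glip gaff unfolding Alex0_def by unfold_locales auto
  define L where "L x = (SOME \<eta>. unit_line \<eta> \<and> \<eta> 0 = x \<and> (\<forall>t. g (\<eta> t) = g x + t))" for x
  have L: "unit_line (L x) \<and> L x 0 = x \<and> (\<forall>t. g (L x t) = g x + t)" for x
    using line_through[OF A(4) gl, of x] unfolding L_def by (rule someI_ex)
  have TL: "\<exists>K. \<forall>s t. (dist (L x s) (L y t))\<^sup>2 = (t + g y - s - g x)\<^sup>2 + K" for x y
    using two_lines[of "L x" "g x" "L y" "g y"] L[of x] L[of y] by (simp add: add.commute)
  define Z where "Z = {z. g z = 0}"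
  define \<Phi> where "\<Phi> x = (L x (- g x), f x / c)" for x
  have sndd: "snd (\<Phi> x) - snd (\<Phi> y) = g x - g y" for x y unfolding \<Phi>_def g_def by simp
  have distf: "dist x y = sqrt ((dist (fst (\<Phi> x)) (fst (\<Phi> y)))\<^sup>2 + (snd (\<Phi> x) - snd (\<Phi> y))\<^sup>2)" for x y
  proof -
    obtain K where K: "\<And>s t. (dist (L x s) (L y t))\<^sup>2 = (t + g y - s - g x)\<^sup>2 + K" using TL[of x y] by blast
    have "(dist x y)\<^sup>2 = (g y - g x)\<^sup>2 + K" using K[of 0 0] L[of x] L[of y] by simp
    moreover have "(dist (fst (\<Phi> x)) (fst (\<Phi> y)))\<^sup>2 = K" using K[of "- g x" "- g y"] unfolding \<Phi>_def by simp
    ultimately have "(dist x y)\<^sup>2 = (dist (fst (\<Phi> x)) (fst (\<Phi> y)))\<^sup>2 + (snd (\<Phi> x) - snd (\<Phi> y))\<^sup>2"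
      unfolding sndd by (simp add: power2_commute)
    then show ?thesis by (metis zero_le_dist real_sqrt_unique)
  qed
  have MS: "Metric_space Z dist"
    by (simp add: Metric_space_def dist_commute dist_triangle)
  have inj: "inj \<Phi>"
  proof (rule injI)
    fix x y assume "\<Phi> x = \<Phi> y"
    then have "dist x y = 0" using distf[of x y] by simp
    then show "x = y" by simp
  qed
  have img: "\<Phi> ` UNIV = Z \<times> UNIV"
  proof
    show "\<Phi> ` UNIV \<subseteq> Z \<times> UNIV" using L unfolding \<Phi>_def Z_def by auto
    show "Z \<times> UNIV \<subseteq> \<Phi> ` UNIV"
    proof
      fix p assume "p \<in> Z \<times> (UNIV :: real set)"
      then obtain z t where p: "p = (z, t)" and z: "g z = 0" unfolding Z_def by auto
      define x where "x = L z (t - b)"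
      have gx: "g x = t - b" using L[of z] z unfolding x_def by simp
      obtain K where K: "\<And>u v. (dist (L x u) (L z v))\<^sup>2 = (v + g z - u - g x)\<^sup>2 + K" using TL[of x z] by blast
      have "K = 0" using K[of 0 "t - b"] L[of x] gx z unfolding x_def[symmetric] by simp
      then have "(dist (L x (- g x)) (L z 0))\<^sup>2 = 0" using K[of "- g x" 0] gx z by simp
      then have "L x (- g x) = z" using L[of z] by simp
      moreover have "f x / c = t" using gx unfolding g_def by simp
      ultimately have "\<Phi> x = p" unfolding \<Phi>_def p by simp
      then show "p \<in> \<Phi> ` UNIV" by blast
    qed
  qed
  have fe: "f x = lip_const f * snd (\<Phi> x)" for x unfolding \<Phi>_def c_def[symmetric] using c0 by simp
  show ?thesis
    by (intro exI[of _ Z] exI[of _ dist] exI[of _ \<Phi>] conjI MS allI distf fe)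
       (simp add: bij_betw_def inj img)
qed

end
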